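(* There is a constant $c$ such that the following holds. Let $x\in\{0,1\}^n$ and let $A$ be a finite set with $x\in A$ and $CT(A\mid x)\le\epsilon$. Then there exist a finite set $A_1$ and a finite partition $\mathcal{A}$ with $C(\mathcal{A})\le\epsilon+c\log n$ such that: 1) $x\in A_1$ and $CT(A_1\mid x)\le\epsilon+c\log n$; 2) $CT(A\mid A_1)<\epsilon+c\log n$ and $CT(A_1\mid A)<\epsilon+c\log n$; 3) $|A_1|\le|A|$; 4) $A_1\in\mathcal{A}$.
   Context: Strings are binary; $C$ is plain Kolmogorov complexity w.r.t. a fixed universal decompressor $D$; finite sets and finite families of finite sets have complexity defined via fixed computable encodings. $CT(y\mid x)$ is the minimal length of a program $p$ such that $D(p,z)$ is defined for all $z$ and $D(p,x)=y$ (with sets replaced by their codes). A family $\mathcal{A}$ of sets is a partition if for all $A',A''\in\mathcal{A}$, $A'\cap A''\ne\varnothing$ implies $A'=A''$. *)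

theory Defs
  imports Complex_Main "HOL-Library.List_Lexorder"
begin

datatype recf = Zf | Sf | Proj nat | Comp recf "recf list" | Prim recf recf | Mn recf

inductive eval :: "recf \<Rightarrow> nat list \<Rightarrow> nat \<Rightarrow> bool" where
  eval_Z: "eval Zf xs 0"
| eval_S: "eval Sf (x # xs) (Suc x)"
| eval_Proj: "i < length xs \<Longrightarrow> eval (Proj i) xs (xs ! i)"
| eval_Comp: "list_all2 (\<lambda>g v. eval g xs v) gs vs \<Longrightarrow> eval f vs y \<Longrightarrow> eval (Comp f gs) xs y"
| eval_Prim0: "eval g xs y \<Longrightarrow> eval (Prim g h) (0 # xs) y"
| eval_PrimS: "eval (Prim g h) (k # xs) z \<Longrightarrow> eval h (k # z # xs) y
               \<Longrightarrow> eval (Prim g h) (Suc k # xs) y"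
| eval_Mn: "eval f (y # xs) 0 \<Longrightarrow> (\<forall>z<y. \<exists>v. eval f (z # xs) v \<and> v > 0)
            \<Longrightarrow> eval (Mn f) xs y"

type_synonym str = "bool list"

fun nat_of_str :: "str \<Rightarrow> nat" where
  "nat_of_str [] = 0"
| "nat_of_str (b # bs) = 2 * nat_of_str bs + (if b then 2 else 1)"

definition computable2 :: "(str \<Rightarrow> str \<Rightarrow> str option) \<Rightarrow> bool" where
  "computable2 F \<longleftrightarrow> (\<exists>f. \<forall>p x y.
      F p x = Some y \<longleftrightarrow> eval f [nat_of_str p, nat_of_str x] (nat_of_str y))"

definition universal_decompressor :: "(str \<Rightarrow> str \<Rightarrow> str option) \<Rightarrow> bool" where
  "universal_decompressor D \<longleftrightarrow> computable2 D \<and>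
     (\<forall>F. computable2 F \<longrightarrow>
        (\<exists>c::nat. \<forall>p. \<exists>q. length q \<le> length p + c \<and> (\<forall>x. D q x = F p x)))"

definition KC :: "(str \<Rightarrow> str \<Rightarrow> str option) \<Rightarrow> str \<Rightarrow> nat" where
  "KC D y = (LEAST k. \<exists>p. length p = k \<and> D p [] = Some y)"

definition CT :: "(str \<Rightarrow> str \<Rightarrow> str option) \<Rightarrow> str \<Rightarrow> str \<Rightarrow> nat" where
  "CT D y x = (LEAST k. \<exists>p. length p = k \<and> (\<forall>z. D p z \<noteq> None) \<and> D p x = Some y)"

definition self_delim :: "str \<Rightarrow> str" where
  "self_delim s = concat (map (\<lambda>b. [b, b]) s) @ [False, True]"

definition enc_set :: "str set \<Rightarrow> str" where
  "enc_set A = concat (map self_delim (sorted_list_of_set A))"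

definition enc_family :: "str set set \<Rightarrow> str" where
  "enc_family F = concat (map self_delim (sorted_list_of_set (enc_set ` F)))"

definition is_partition :: "'a set set \<Rightarrow> bool" where
  "is_partition \<A> \<longleftrightarrow> (\<forall>A1\<in>\<A>. \<forall>A2\<in>\<A>. A1 \<inter> A2 \<noteq> {} \<longrightarrow> A1 = A2)"

end

theory Submission
  imports Defs
begin


fun PR :: "(nat list \<Rightarrow> nat) \<Rightarrow> (nat list \<Rightarrow> nat) \<Rightarrow> nat list \<Rightarrow> nat" where
  "PR g h [] = 0"
| "PR g h (0 # xs) = g xs"
| "PR g h (Suc n # xs) = h (n # PR g h (n # xs) # xs)"

definition rep :: "(nat \<Rightarrow> bool) \<Rightarrow> nat \<Rightarrow> (nat \<Rightarrow> nat list \<Rightarrow> nat) \<Rightarrow> bool" where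
  "rep T k g \<longleftrightarrow> (\<exists>r. \<forall>q xs. T q \<longrightarrow> length xs = k \<longrightarrow> eval r (xs @ [q]) (g q xs))"

lemma R_cong: assumes "rep T k g" and e: "\<And>q xs. T q \<Longrightarrow> length xs = k \<Longrightarrow> g q xs = g' q xs" shows "rep T k g'"
proof -
  obtain r where r: "\<And>q xs. T q \<Longrightarrow> length xs = k \<Longrightarrow> eval r (xs @ [q]) (g q xs)"
    using assms(1) unfolding rep_def by blast
  show ?thesis unfolding rep_def
    apply (rule exI[of _ r]) using r e by simp
qed

fun cnst :: "nat \<Rightarrow> recf" where
  "cnst 0 = Zf" | "cnst (Suc c) = Comp Sf [cnst c]"

lemma eval_cnst: "eval (cnst c) xs c"
proof (induction c)
  case 0 then show ?case by (simp add: eval_Z)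
next
  case (Suc c)
  have "eval Sf [c] (Suc c)" using eval_S[of c "[]"] by simp
  then show ?case using Suc by (auto intro!: eval_Comp[where vs="[c]"])
qed

lemma R_const: "rep T k (\<lambda>q xs. c)"
  unfolding rep_def using eval_cnst by blast

lemma R_proj: "i < k \<Longrightarrow> rep T k (\<lambda>q xs. xs ! i)"
  unfolding rep_def
  apply (rule exI[of _ "Proj i"]) apply clarify
  subgoal for q xs using eval_Proj[of i "xs@[q]"] by (simp add: nth_append)
  done

lemma R_q: "rep T k (\<lambda>q xs. q)"
  unfolding rep_def
  apply (rule exI[of _ "Proj k"]) apply clarify
  subgoal for q xs using eval_Proj[of k "xs@[q]"] by simp
  done

lemma R_comp: assumes f: "rep T m f" and gs: "list_all (rep T k) gs" and l: "length gs = m"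
  shows "rep T k (\<lambda>q xs. f q (map (\<lambda>g. g q xs) gs))"
proof -
  obtain rf where rf: "\<And>q xs. T q \<Longrightarrow> length xs = m \<Longrightarrow> eval rf (xs @ [q]) (f q xs)"
    using f unfolding rep_def by blast
  have "\<forall>g\<in>set gs. \<exists>r. \<forall>q xs. T q \<longrightarrow> length xs = k \<longrightarrow> eval r (xs @ [q]) (g q xs)"
    using gs unfolding rep_def list_all_iff by blast
  from bchoice[OF this] obtain R where R0: "\<forall>g\<in>set gs. \<forall>q xs. T q \<longrightarrow> length xs = k \<longrightarrow> eval (R g) (xs @ [q]) (g q xs)"
    by blast
  have R: "\<And>g q xs. g \<in> set gs \<Longrightarrow> T q \<Longrightarrow> length xs = k \<Longrightarrow> eval (R g) (xs @ [q]) (g q xs)"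
    using R0 by blast
  show ?thesis unfolding rep_def
  proof (intro exI allI impI)
    fix q xs assume T: "T q" and lx: "length (xs::nat list) = k"
    have "list_all2 (\<lambda>g v. eval g (xs @ [q]) v) (map R gs @ [Proj k]) (map (\<lambda>g. g q xs) gs @ [q])"
    proof (rule list_all2_appendI)
      show "list_all2 (\<lambda>g v. eval g (xs @ [q]) v) (map R gs) (map (\<lambda>g. g q xs) gs)"
        using R[OF _ T lx] by (auto simp: list_all2_conv_all_nth)
      show "list_all2 (\<lambda>g v. eval g (xs @ [q]) v) [Proj k] [q]"
        using eval_Proj[of k "xs @ [q]"] lx by auto
    qed
    moreover have "eval rf (map (\<lambda>g. g q xs) gs @ [q]) (f q (map (\<lambda>g. g q xs) gs))"
      using rf[OF T] l by simp
    ultimately show "eval (Comp rf (map R gs @ [Proj k])) (xs @ [q]) (f q (map (\<lambda>g. g q xs) gs))"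
      by (rule eval_Comp)
  qed
qed

lemma R_prim: assumes g: "rep T k g" and h: "rep T (Suc (Suc k)) h"
  shows "rep T (Suc k) (\<lambda>q xs. PR (g q) (h q) xs)"
proof -
  obtain rg where rg: "\<And>q xs. T q \<Longrightarrow> length xs = k \<Longrightarrow> eval rg (xs @ [q]) (g q xs)"
    using g unfolding rep_def by blast
  obtain rh where rh: "\<And>q xs. T q \<Longrightarrow> length xs = Suc (Suc k) \<Longrightarrow> eval rh (xs @ [q]) (h q xs)"
    using h unfolding rep_def by blast
  have *: "eval (Prim rg rh) (n # ys @ [q]) (PR (g q) (h q) (n # ys))" if "T q" "length ys = k" for n ys q
  proof (induction n)
    case 0 then show ?case using rg[OF that] by (simp add: eval_Prim0)
  next
    case (Suc n)
    show ?case apply (rule eval_PrimS[OF Suc])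
      using rh[OF that(1), of "n # PR (g q) (h q) (n # ys) # ys"] that by simp
  qed
  show ?thesis unfolding rep_def
    apply (rule exI[of _ "Prim rg rh"])
    apply clarify
    subgoal for q xs using *[of q "tl xs" "hd xs"] by (cases xs) auto
    done
qed

lemma R_mn: assumes f: "rep T (Suc k) f" and ex: "\<And>q xs. T q \<Longrightarrow> length xs = k \<Longrightarrow> \<exists>y. f q (y # xs) = 0"
  shows "rep T k (\<lambda>q xs. LEAST y. f q (y # xs) = 0)"
proof -
  obtain rf where rf: "\<And>q xs. T q \<Longrightarrow> length xs = Suc k \<Longrightarrow> eval rf (xs @ [q]) (f q xs)"
    using f unfolding rep_def by blast
  show ?thesis unfolding rep_def
  proof (intro exI allI impI)
    fix q xs assume T: "T q" and lx: "length (xs::nat list) = k"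
    let ?y = "LEAST y. f q (y # xs) = 0"
    have y: "f q (?y # xs) = 0" by (rule LeastI_ex[OF ex[OF T lx]])
    show "eval (Mn rf) (xs @ [q]) ?y"
    proof (rule eval_Mn)
      show "eval rf (?y # xs @ [q]) 0" using rf[OF T, of "?y # xs"] y lx by simp
      show "\<forall>z<?y. \<exists>v. eval rf (z # xs @ [q]) v \<and> 0 < v"
      proof (intro allI impI)
        fix z assume "z < ?y"
        then have "f q (z # xs) \<noteq> 0" by (rule not_less_Least)
        moreover have "eval rf (z # xs @ [q]) (f q (z # xs))" using rf[OF T, of "z # xs"] lx by simp
        ultimately show "\<exists>v. eval rf (z # xs @ [q]) v \<and> 0 < v" by blast
      qed
    qed
  qed
qed

lemma R_orc: assumes orc: "\<And>c b. TD c \<Longrightarrow> eval fD [c, b] (dd c b)"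
  and a: "rep T k a" and b: "rep T k b" and t: "\<And>q xs. T q \<Longrightarrow> length xs = k \<Longrightarrow> TD (a q xs)"
  shows "rep T k (\<lambda>q xs. dd (a q xs) (b q xs))"
proof -
  obtain ra where ra: "\<And>q xs. T q \<Longrightarrow> length xs = k \<Longrightarrow> eval ra (xs @ [q]) (a q xs)"
    using a unfolding rep_def by blast
  obtain rb where rb: "\<And>q xs. T q \<Longrightarrow> length xs = k \<Longrightarrow> eval rb (xs @ [q]) (b q xs)"
    using b unfolding rep_def by blast
  show ?thesis unfolding rep_def
    apply (rule exI[of _ "Comp fD [ra, rb]"])
    apply clarify
    subgoal for q xs
      apply (rule eval_Comp[where vs="[a q xs, b q xs]"])
      using ra rb orc t by auto
    done
qed

lemma R_Suc: "rep T k g \<Longrightarrow> rep T k (\<lambda>q xs. Suc (g q xs))"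
proof -
  assume g: "rep T k g"
  have s: "rep T 1 (\<lambda>q xs. Suc (xs ! 0))" unfolding rep_def
    apply (rule exI[of _ "Sf"]) apply clarify
    subgoal for q xs using eval_S[of "xs!0" "[q]"] by (cases xs) auto
    done
  show ?thesis using R_comp[OF s, where gs="[g]" and k=k] g by simp
qed

lemma R_comp1: "rep T 1 f \<Longrightarrow> rep T k g1 \<Longrightarrow> rep T k (\<lambda>q xs. f q [g1 q xs])"
  using R_comp[of T 1 f k "[g1]"] by simp
lemma R_comp2: "rep T 2 f \<Longrightarrow> rep T k g1 \<Longrightarrow> rep T k g2 \<Longrightarrow> rep T k (\<lambda>q xs. f q [g1 q xs, g2 q xs])"
  using R_comp[of T 2 f k "[g1, g2]"] by simp
lemma R_comp3: "rep T 3 f \<Longrightarrow> rep T k g1 \<Longrightarrow> rep T k g2 \<Longrightarrow> rep T k g3 \<Longrightarrow> rep T k (\<lambda>q xs. f q [g1 q xs, g2 q xs, g3 q xs])"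
  using R_comp[of T 3 f k "[g1, g2, g3]"] by simp
lemma R_comp4: "rep T 4 f \<Longrightarrow> rep T k g1 \<Longrightarrow> rep T k g2 \<Longrightarrow> rep T k g3 \<Longrightarrow> rep T k g4 \<Longrightarrow> rep T k (\<lambda>q xs. f q [g1 q xs, g2 q xs, g3 q xs, g4 q xs])"
  using R_comp[of T 4 f k "[g1, g2, g3, g4]"] by simp

lemma lift1: "rep T 1 (\<lambda>q xs. f q (xs!0)) \<Longrightarrow> rep T k g1 \<Longrightarrow> rep T k (\<lambda>q xs. f q (g1 q xs))"
  by (drule R_comp1) auto
lemma lift2: "rep T 2 (\<lambda>q xs. f q (xs!0) (xs!1)) \<Longrightarrow> rep T k g1 \<Longrightarrow> rep T k g2 \<Longrightarrow> rep T k (\<lambda>q xs. f q (g1 q xs) (g2 q xs))"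
  by (drule R_comp2) auto
lemma lift3: "rep T 3 (\<lambda>q xs. f q (xs!0) (xs!1) (xs!2)) \<Longrightarrow> rep T k g1 \<Longrightarrow> rep T k g2 \<Longrightarrow> rep T k g3 \<Longrightarrow> rep T k (\<lambda>q xs. f q (g1 q xs) (g2 q xs) (g3 q xs))"
  by (drule R_comp3) auto
lemma lift4: "rep T 4 (\<lambda>q xs. f q (xs!0) (xs!1) (xs!2) (xs!3)) \<Longrightarrow> rep T k g1 \<Longrightarrow> rep T k g2 \<Longrightarrow> rep T k g3 \<Longrightarrow> rep T k g4 \<Longrightarrow> rep T k (\<lambda>q xs. f q (g1 q xs) (g2 q xs) (g3 q xs) (g4 q xs))"
  by (drule R_comp4) auto

lemma R_rec: assumes g: "rep T k g" and h: "rep T (Suc (Suc k)) h"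
  and e0: "\<And>q ys. length ys = k \<Longrightarrow> f q 0 ys = g q ys"
  and eS: "\<And>q n ys. length ys = k \<Longrightarrow> f q (Suc n) ys = h q (n # f q n ys # ys)"
  shows "rep T (Suc k) (\<lambda>q xs. f q (hd xs) (tl xs))"
proof (rule R_cong[OF R_prim[OF g h]])
  fix q xs assume "length (xs::nat list) = Suc k"
  then obtain n ys where xs: "xs = n # ys" and l: "length ys = k" by (cases xs) auto
  have "PR (g q) (h q) (n # ys) = f q n ys" by (induction n) (auto simp: e0[OF l] eS[OF l])
  then show "PR (g q) (h q) xs = f q (hd xs) (tl xs)" using xs by simp
qed

lemma R_rec1: assumes g: "rep T 0 (\<lambda>q xs. g q)" and h: "rep T 2 (\<lambda>q xs. h q (xs!0) (xs!1))"
  and e0: "\<And>q. f q 0 = g q" and eS: "\<And>q n. f q (Suc n) = h q n (f q n)"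
  shows "rep T 1 (\<lambda>q xs. f q (xs!0))"
proof -
  have "rep T (Suc 0) (\<lambda>q xs. f q (xs!0))"
  apply (rule R_cong[OF R_rec[of T 0 "\<lambda>q ys. g q" "\<lambda>q ys. h q (ys!0) (ys!1)" "\<lambda>q n ys. f q n", OF g h[unfolded numeral_2_eq_2]]])
  using e0 eS by (auto simp: length_Suc_conv)
  thus ?thesis by simp
qed

lemma R_rec2: assumes g: "rep T 1 (\<lambda>q xs. g q (xs!0))" and h: "rep T 3 (\<lambda>q xs. h q (xs!0) (xs!1) (xs!2))"
  and e0: "\<And>q a. f q 0 a = g q a" and eS: "\<And>q n a. f q (Suc n) a = h q n (f q n a) a"
  shows "rep T 2 (\<lambda>q xs. f q (xs!0) (xs!1))"
proof -
  have "rep T (Suc (Suc 0)) (\<lambda>q xs. f q (xs!0) (xs!1))"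
  apply (rule R_cong[OF R_rec[of T "Suc 0" "\<lambda>q ys. g q (ys!0)" "\<lambda>q ys. h q (ys!0) (ys!1) (ys!2)" "\<lambda>q n ys. f q n (ys!0)", OF g[unfolded One_nat_def] h[unfolded numeral_3_eq_3]]])
  using e0 eS by (auto simp: nth_tl length_Suc_conv)
  thus ?thesis by (simp add: numeral_2_eq_2)
qed

lemma four_suc: "(4::nat) = Suc (Suc (Suc (Suc 0)))" by simp

lemma R_rec3: assumes g: "rep T 2 (\<lambda>q xs. g q (xs!0) (xs!1))" and h: "rep T 4 (\<lambda>q xs. h q (xs!0) (xs!1) (xs!2) (xs!3))"
  and e0: "\<And>q a b. f q 0 a b = g q a b" and eS: "\<And>q n a b. f q (Suc n) a b = h q n (f q n a b) a b"
  shows "rep T 3 (\<lambda>q xs. f q (xs!0) (xs!1) (xs!2))"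
proof -
  have "rep T (Suc (Suc (Suc 0))) (\<lambda>q xs. f q (xs!0) (xs!1) (xs!2))"
  apply (rule R_cong[OF R_rec[of T "Suc (Suc 0)" "\<lambda>q ys. g q (ys!0) (ys!1)" "\<lambda>q ys. h q (ys!0) (ys!1) (ys!2) (ys!3)" "\<lambda>q n ys. f q n (ys!0) (ys!1)", OF g[unfolded numeral_2_eq_2] h[unfolded four_suc]]])
  using e0 eS by (auto simp: nth_tl length_Suc_conv)
  thus ?thesis by (simp add: numeral_3_eq_3)
qed



lemma R_add0: "rep T 2 (\<lambda>q xs. xs!0 + xs!1)"
  by (rule R_rec2[where g="\<lambda>q a. a" and h="\<lambda>q n z a. Suc z"])
     (auto intro!: R_proj R_Suc)
lemma R_add[intro]: "rep T k a \<Longrightarrow> rep T k b \<Longrightarrow> rep T k (\<lambda>q xs. a q xs + b q xs)"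
  by (rule lift2[OF R_add0])

lemma R_pred0: "rep T 1 (\<lambda>q xs. xs!0 - 1)"
  by (rule R_rec1[where g="\<lambda>q. 0" and h="\<lambda>q n z. n"]) (auto intro!: R_proj R_const R_add)
lemma R_pred: "rep T k a \<Longrightarrow> rep T k (\<lambda>q xs. a q xs - 1)"
  by (rule lift1[OF R_pred0])

lemma R_predS: "rep T k a \<Longrightarrow> rep T k (\<lambda>q xs. a q xs - Suc 0)"
  using R_pred by simp

lemma R_sub0: "rep T 2 (\<lambda>q xs. xs!1 - xs!0)"
  by (rule R_rec2[where g="\<lambda>q a. a" and h="\<lambda>q n z a. z - 1"])
     (auto intro!: R_proj R_pred R_predS)
lemma R_sub[intro]: "rep T k a \<Longrightarrow> rep T k b \<Longrightarrow> rep T k (\<lambda>q xs. a q xs - b q xs)"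
  by (rule lift2[OF R_sub0])

lemma R_mul0: "rep T 2 (\<lambda>q xs. xs!0 * xs!1)"
  by (rule R_rec2[where g="\<lambda>q a. 0" and h="\<lambda>q n z a. z + a"])
     (auto intro!: R_proj R_const R_add)
lemma R_mul[intro]: "rep T k a \<Longrightarrow> rep T k b \<Longrightarrow> rep T k (\<lambda>q xs. a q xs * b q xs)"
  by (rule lift2[OF R_mul0])

lemma R_pow0: "rep T 1 (\<lambda>q xs. 2 ^ (xs!0))"
  by (rule R_rec1[where g="\<lambda>q. 1" and h="\<lambda>q n z. z + z"]) (auto intro!: R_proj R_const R_add)
lemma R_pow[intro]: "rep T k a \<Longrightarrow> rep T k (\<lambda>q xs. 2 ^ a q xs)"
  by (rule lift1[OF R_pow0])

lemma R_par0: "rep T 1 (\<lambda>q xs. xs!0 mod 2)"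
  by (rule R_rec1[where g="\<lambda>q. 0" and h="\<lambda>q n z. 1 - z"]) (auto intro!: R_proj R_const R_sub simp: mod_Suc)
lemma R_par[intro]: "rep T k a \<Longrightarrow> rep T k (\<lambda>q xs. a q xs mod 2)"
  by (rule lift1[OF R_par0])

lemma R_half0: "rep T 1 (\<lambda>q xs. xs!0 div 2)"
  by (rule R_rec1[where g="\<lambda>q. 0" and h="\<lambda>q n z. z + n mod 2"]) (auto intro!: R_proj R_const R_add R_par simp: div_Suc mod_Suc)
lemma R_half[intro]: "rep T k a \<Longrightarrow> rep T k (\<lambda>q xs. a q xs div 2)"
  by (rule lift1[OF R_half0])

lemma R_nth[intro]: "i < k \<Longrightarrow> rep T k (\<lambda>q xs. xs ! i)" by (rule R_proj)
lemmas R_basic[intro] = R_const R_q R_Suc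
lemmas Rs0 = R_add R_sub R_mul R_pow R_par R_half R_const R_q R_Suc R_nth


definition repP :: "(nat \<Rightarrow> bool) \<Rightarrow> nat \<Rightarrow> (nat \<Rightarrow> nat list \<Rightarrow> bool) \<Rightarrow> bool" where
  "repP T k P \<longleftrightarrow> rep T k (\<lambda>q xs. if P q xs then 0 else 1)"

lemma P_eq[intro]: "rep T k a \<Longrightarrow> rep T k b \<Longrightarrow> repP T k (\<lambda>q xs. a q xs = b q xs)"
  unfolding repP_def
  apply (rule R_cong[where g="\<lambda>q xs. 1 - (1 - ((a q xs - b q xs) + (b q xs - a q xs)))"])
  by (auto intro!: Rs0 simp: repP_def)

lemma P_less[intro]: "rep T k a \<Longrightarrow> rep T k b \<Longrightarrow> repP T k (\<lambda>q xs. a q xs < b q xs)"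
  unfolding repP_def
  apply (rule R_cong[where g="\<lambda>q xs. 1 - (b q xs - a q xs)"])
  by (auto intro!: Rs0 simp: repP_def)

lemma P_le[intro]: "rep T k a \<Longrightarrow> rep T k b \<Longrightarrow> repP T k (\<lambda>q xs. a q xs \<le> b q xs)"
  unfolding repP_def
  apply (rule R_cong[where g="\<lambda>q xs. 1 - (1 - (a q xs - b q xs))"])
  by (auto intro!: Rs0 simp: repP_def)

lemma P_and[intro]: "repP T k P \<Longrightarrow> repP T k Q \<Longrightarrow> repP T k (\<lambda>q xs. P q xs \<and> Q q xs)"
  unfolding repP_def
  apply (rule R_cong[where g="\<lambda>q xs. 1 - (1 - ((if P q xs then 0 else 1) + (if Q q xs then 0 else 1)))"])
  by (auto intro!: Rs0 simp: repP_def)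

lemma P_or[intro]: "repP T k P \<Longrightarrow> repP T k Q \<Longrightarrow> repP T k (\<lambda>q xs. P q xs \<or> Q q xs)"
  unfolding repP_def
  apply (rule R_cong[where g="\<lambda>q xs. (if P q xs then 0 else 1) * (if Q q xs then 0 else (1::nat))"])
  by (auto intro!: Rs0 simp: repP_def)

lemma P_not[intro]: "repP T k P \<Longrightarrow> repP T k (\<lambda>q xs. \<not> P q xs)"
  unfolding repP_def
  apply (rule R_cong[where g="\<lambda>q xs. 1 - (if P q xs then 0 else 1)"])
  by (auto intro!: Rs0 simp: repP_def)

lemma P_const[intro]: "repP T k (\<lambda>q xs. c)"
  unfolding repP_def by (rule R_const)

lemma R_if[intro]: "repP T k P \<Longrightarrow> rep T k a \<Longrightarrow> rep T k b \<Longrightarrow> rep T k (\<lambda>q xs. if P q xs then a q xs else b q xs)"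
  unfolding repP_def
  apply (rule R_cong[where g="\<lambda>q xs. (1 - (if P q xs then 0 else 1)) * a q xs + (if P q xs then 0 else 1) * b q xs"])
  by (auto intro!: Rs0 simp: repP_def)

lemma R_least: assumes "repP T (Suc k) P" and "\<And>q xs. T q \<Longrightarrow> length xs = k \<Longrightarrow> \<exists>y. P q (y # xs)"
  shows "rep T k (\<lambda>q xs. LEAST y. P q (y # xs))"
proof -
  have "rep T k (\<lambda>q xs. LEAST y. (\<lambda>q xs. if P q xs then 0 else 1) q (y # xs) = (0::nat))"
    apply (rule R_mn) using assms unfolding repP_def by auto
  moreover have "\<And>q xs y. ((if P q xs then 0 else 1) = (0::nat)) = P q xs" by simp
  ultimately show ?thesis by simp
qed

lemma R_least1: assumes "repP T 2 (\<lambda>q xs. P q (xs!0) (xs!1))" and "\<And>q a. T q \<Longrightarrow> \<exists>y. P q y a"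
  shows "rep T 1 (\<lambda>q xs. LEAST y. P q y (xs!0))"
proof -
  have "rep T (Suc 0) (\<lambda>q xs. LEAST y. (\<lambda>q xs. P q (xs!0) (xs!1)) q (y # xs))"
    apply (rule R_least) using assms by (auto simp: numeral_2_eq_2 length_Suc_conv)
  then show ?thesis by simp
qed

lemma R_least2: assumes "repP T 3 (\<lambda>q xs. P q (xs!0) (xs!1) (xs!2))" and "\<And>q a b. T q \<Longrightarrow> \<exists>y. P q y a b"
  shows "rep T 2 (\<lambda>q xs. LEAST y. P q y (xs!0) (xs!1))"
proof -
  have "rep T (Suc (Suc 0)) (\<lambda>q xs. LEAST y. (\<lambda>q xs. P q (xs!0) (xs!1) (xs!2)) q (y # xs))"
    apply (rule R_least) using assms by (auto simp: numeral_3_eq_3 length_Suc_conv)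
  then show ?thesis by (simp add: numeral_2_eq_2)
qed



named_theorems rp
declare R_add[rp] R_sub[rp] R_mul[rp] R_pow[rp] R_par[rp] R_half[rp] R_const[rp] R_q[rp] R_Suc[rp] R_nth[rp]
  R_if[rp] P_eq[rp] P_less[rp] P_le[rp] P_and[rp] P_or[rp] P_not[rp] P_const[rp] R_predS[rp]

fun S :: "nat \<Rightarrow> str" where
  "S 0 = []" | "S (Suc n) = (odd n) # S (n div 2)"

abbreviation N :: "str \<Rightarrow> nat" where "N \<equiv> nat_of_str"

lemma N_S[simp]: "N (S n) = n"
  by (induction n rule: S.induct) auto

lemma S_N[simp]: "S (N s) = s"
proof (induction s)
  case (Cons b bs)
  show ?case
  proof (cases b)
    case True
    then have "N (b # bs) = Suc (2 * N bs + 1)" by simp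
    then show ?thesis using Cons True by (simp del: nat_of_str.simps)
  next
    case False
    then have "N (b # bs) = Suc (2 * N bs)" by simp
    then show ?thesis using Cons False by (simp del: nat_of_str.simps)
  qed
qed simp

lemma N_inj: "N s = N t \<longleftrightarrow> s = t" by (metis S_N)

lemma N_zero[simp]: "N s = 0 \<longleftrightarrow> s = []" by (cases s) auto

lemma N_ge_length: "length s \<le> N s" by (induction s) auto

definition tlc :: "nat \<Rightarrow> nat" where "tlc c = (c - 1) div 2"

lemma N_tl: "N (tl s) = tlc (N s)"
  by (cases s) (auto simp: tlc_def)

lemma bit_N: "N (b # s) mod 2 = 0 \<longleftrightarrow> b" by auto

definition dropc :: "nat \<Rightarrow> nat \<Rightarrow> nat" where "dropc k c = (tlc ^^ k) c"

lemma N_drop: "N (drop k s) = dropc k (N s)"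
proof (induction k arbitrary: s)
  case 0 then show ?case by (simp add: dropc_def)
next
  case (Suc k)
  have "drop (Suc k) s = drop k (tl s)" by (simp add: drop_Suc)
  then show ?case using Suc[of "tl s"] by (simp add: dropc_def funpow_swap1 N_tl)
qed

definition lenc :: "nat \<Rightarrow> nat" where "lenc c = (LEAST k. dropc k c = 0)"

lemma lenc_N: "lenc (N s) = length s"
proof -
  have "(LEAST k. dropc k (N s) = 0) = length s"
    by (rule Least_equality) (auto simp flip: N_drop)
  then show ?thesis by (simp add: lenc_def)
qed

definition appc :: "nat \<Rightarrow> nat \<Rightarrow> nat" where "appc a b = a + 2 ^ lenc a * b"

lemma N_append: "N (xs @ ys) = N xs + 2 ^ length xs * N ys"
  by (induction xs) (auto simp: algebra_simps)

lemma appc_N: "N (xs @ ys) = appc (N xs) (N ys)"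
  by (simp add: appc_def lenc_N N_append)

lemma R_tlc0: "rep T 1 (\<lambda>q xs. tlc (xs!0))"
  unfolding tlc_def by (intro rp) simp_all
lemma R_tlc[rp]: "rep T k a \<Longrightarrow> rep T k (\<lambda>q xs. tlc (a q xs))"
  by (rule lift1[OF R_tlc0])

lemma R_dropc0: "rep T 2 (\<lambda>q xs. dropc (xs!0) (xs!1))"
  by (rule R_rec2[where g="\<lambda>q a. a" and h="\<lambda>q n z a. tlc z"]) (intro rp, simp_all add: dropc_def)+
lemma R_dropc[rp]: "rep T k a \<Longrightarrow> rep T k b \<Longrightarrow> rep T k (\<lambda>q xs. dropc (a q xs) (b q xs))"
  by (rule lift2[OF R_dropc0])

lemma dropc_self: "dropc c c = 0"
proof -
  have "dropc c (N (S c)) = N (drop c (S c))" by (simp add: N_drop)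
  also have "... = 0" using N_ge_length[of "S c"] by simp
  finally show ?thesis by simp
qed

lemma R_lenc0: "rep T 1 (\<lambda>q xs. lenc (xs!0))"
  unfolding lenc_def
  apply (rule R_least1[where P="\<lambda>q y a. dropc y a = 0"])
   apply (intro rp; simp)
  using dropc_self by blast
lemma R_lenc[rp]: "rep T k a \<Longrightarrow> rep T k (\<lambda>q xs. lenc (a q xs))"
  by (rule lift1[OF R_lenc0])

lemma R_appc0: "rep T 2 (\<lambda>q xs. appc (xs!0) (xs!1))"
  unfolding appc_def by (intro rp) simp_all
lemma R_appc[rp]: "rep T k a \<Longrightarrow> rep T k b \<Longrightarrow> rep T k (\<lambda>q xs. appc (a q xs) (b q xs))"
  by (rule lift2[OF R_appc0])

definition catc :: "(nat \<Rightarrow> nat) \<Rightarrow> nat \<Rightarrow> nat" where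
  "catc pc m = N (concat (map (\<lambda>i. S (pc i)) [0..<m]))"

fun cr :: "(nat \<Rightarrow> nat) \<Rightarrow> nat \<Rightarrow> nat \<Rightarrow> nat" where
  "cr pc m 0 = 0" | "cr pc m (Suc k) = appc (pc (m - Suc k)) (cr pc m k)"

lemma cr_eq: "k \<le> m \<Longrightarrow> cr pc m k = N (concat (map (\<lambda>i. S (pc i)) [m-k..<m]))"
proof (induction k)
  case 0 then show ?case by simp
next
  case (Suc k)
  have "[m - Suc k..<m] = (m - Suc k) # [m - k..<m]"
    using Suc.prems by (simp add: upt_conv_Cons Suc_diff_Suc)
  then show ?case using Suc by (simp add: appc_N)
qed

lemma R_cat: assumes pc: "rep T 2 (\<lambda>q xs. pc q (xs!0) (xs!1))"
  shows "rep T 2 (\<lambda>q xs. catc (\<lambda>i. pc q i (xs!1)) (xs!0))"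
proof -
  have "rep T 3 (\<lambda>q xs. (\<lambda>q k m a. cr (\<lambda>i. pc q i a) m k) q (xs!0) (xs!1) (xs!2))"
  proof (rule R_rec3[where g="\<lambda>q m a. 0" and h="\<lambda>q n z m a. appc (pc q (m - Suc n) a) z"])
    show "rep T 4 (\<lambda>q xs. appc (pc q (xs ! 2 - Suc (xs ! 0)) (xs ! 3)) (xs ! 1))"
      by (intro R_appc lift2[OF pc] rp) simp_all
  qed (intro rp, simp_all)+
  then have "rep T 2 (\<lambda>q xs. (\<lambda>q k m a. cr (\<lambda>i. pc q i a) m k) q (xs!0) (xs!0) (xs!1))"
    by (rule lift3) (intro rp, simp)+
  then show ?thesis by (rule R_cong) (simp add: cr_eq catc_def)
qed



definition bitc :: "nat \<Rightarrow> bool" where "bitc d \<longleftrightarrow> d mod 2 = 0"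

lemma S_odd: "S (2 * k + 1) = False # S k" by simp
lemma S_even: "S (2 * k + 2) = True # S k"
proof -
  have "2 * k + 2 = Suc (2 * k + 1)" by simp
  then show ?thesis by simp
qed

lemma S_2[simp]: "S 2 = [True]"
proof -
  have "S (2 * 0 + 2) = True # S 0" by (rule S_even)
  then show ?thesis by (simp only: mult_0_right add_0 S.simps(1))
qed

lemma S_small[simp]: "S 1 = [False]" "S 3 = [False, False]" "S 6 = [True, True]" "S 5 = [False, True]"
  using S_odd[of 0] S_odd[of 1] S_even[of 2] S_odd[of 2] by simp_all

lemma N2: "N [b, b] = (if b then 6 else 3)" by simp
lemma N1: "N [b] = (if b then 2 else 1)" by simp

lemma bitc_drop: "i < length w \<Longrightarrow> bitc (dropc i (N w)) = w ! i"
proof -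
  assume i: "i < length w"
  have "drop i w = w ! i # drop (Suc i) w" using i by (rule Cons_nth_drop_Suc[symmetric])
  then have "dropc i (N w) = N (w ! i # drop (Suc i) w)" by (metis N_drop)
  then show ?thesis unfolding bitc_def by simp
qed

lemma bitc_N: "bitc (N (b # t)) \<longleftrightarrow> b" unfolding bitc_def by (rule bit_N)

definition sdc :: "nat \<Rightarrow> nat" where
  "sdc c = appc (catc (\<lambda>i. N [bitc (dropc i c), bitc (dropc i c)]) (lenc c)) 5"

lemma sdc_N: "sdc (N w) = N (self_delim w)"
proof -
  have "map (\<lambda>b. [b, b]) w = map (\<lambda>i. S (N [bitc (dropc i (N w)), bitc (dropc i (N w))])) [0..<length w]"
    by (rule nth_equalityI) (auto simp: bitc_drop)
  moreover have "(5::nat) = N [False, True]" by simp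
  ultimately show ?thesis unfolding sdc_def self_delim_def catc_def
    by (simp only: lenc_N appc_N)
qed

lemma R_bitP[rp]: "rep T k a \<Longrightarrow> repP T k (\<lambda>q xs. bitc (a q xs))"
  unfolding bitc_def by (intro rp)

lemma R_sdc0: "rep T 1 (\<lambda>q xs. sdc (xs!0))"
proof -
  have "rep T 2 (\<lambda>q xs. catc (\<lambda>i. (\<lambda>q i c. N [bitc (dropc i c), bitc (dropc i c)]) q i (xs!1)) (xs!0))"
    by (rule R_cat) (unfold N2, intro rp; simp)
  then have "rep T 1 (\<lambda>q xs. (\<lambda>q a b. catc (\<lambda>i. N [bitc (dropc i b), bitc (dropc i b)]) a) q (lenc (xs!0)) (xs!0))"
    by (rule lift2) (intro rp; simp)+
  then have "rep T 1 (\<lambda>q xs. appc (catc (\<lambda>i. N [bitc (dropc i (xs!0)), bitc (dropc i (xs!0))]) (lenc (xs!0))) 5)"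
    by (intro rp) simp
  then show ?thesis unfolding sdc_def .
qed
lemma R_sdc[rp]: "rep T k a \<Longrightarrow> rep T k (\<lambda>q xs. sdc (a q xs))"
  by (rule lift1[OF R_sdc0])

section \<open>Parsing\<close>

definition dbl :: "nat \<Rightarrow> bool" where
  "dbl d \<longleftrightarrow> d \<noteq> 0 \<and> tlc d \<noteq> 0 \<and> d mod 2 = tlc d mod 2"

definition j0 :: "nat \<Rightarrow> nat" where "j0 s = (LEAST j. \<not> dbl (dropc (2 * j) s))"

definition firstc :: "nat \<Rightarrow> nat" where
  "firstc s = catc (\<lambda>i. N [bitc (dropc (2 * i) s)]) (j0 s)"

definition restc :: "nat \<Rightarrow> nat" where "restc s = dropc (2 * j0 s + 2) s"

lemma mod2_aux: "((x::nat) mod 2 = y mod 2) \<longleftrightarrow> ((x mod 2 = 0) \<longleftrightarrow> (y mod 2 = 0))" by presburger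

lemma dbl_cons: "dbl (N (b # c # t)) \<longleftrightarrow> b = c"
proof -
  have t: "tlc (N (b # c # t)) = N (c # t)" by (metis N_tl list.sel(3))
  have "N (b # c # t) mod 2 = tlc (N (b # c # t)) mod 2 \<longleftrightarrow> b = c"
    unfolding t by (simp only: mod2_aux bit_N)
  then show ?thesis unfolding dbl_def using t by simp
qed

abbreviation dbls :: "str \<Rightarrow> str" where "dbls w \<equiv> concat (map (\<lambda>b. [b, b]) w)"

lemma drop_dbls: "i \<le> length w \<Longrightarrow> drop (2 * i) (dbls w @ t) = dbls (drop i w) @ t"
proof (induction w arbitrary: i)
  case Nil then show ?case by simp
next
  case (Cons b w)
  show ?case
  proof (cases i)
    case 0 then show ?thesis by simp
  next
    case (Suc i')
    then have "drop (2 * i) (dbls (b # w) @ t) = drop (2 * i') (dbls w @ t)" by simp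
    then show ?thesis using Cons Suc by simp
  qed
qed

lemma parse_sd:
  shows "j0 (N (self_delim w @ r)) = length w"
    and "firstc (N (self_delim w @ r)) = N w"
    and "restc (N (self_delim w @ r)) = N r"
proof -
  let ?s = "self_delim w @ r"
  have sd: "?s = dbls w @ ([False, True] @ r)" by (simp add: self_delim_def)
  have dr: "dropc (2 * i) (N ?s) = N (dbls (drop i w) @ ([False, True] @ r))" if "i \<le> length w" for i
    using drop_dbls[OF that, of "[False, True] @ r"] sd by (metis N_drop)
  have d1: "dbl (dropc (2 * i) (N ?s))" if "i < length w" for i
  proof -
    have "drop i w = w ! i # drop (Suc i) w" using that by (rule Cons_nth_drop_Suc[symmetric])
    then have "dropc (2 * i) (N ?s) = N (w ! i # w ! i # (dbls (drop (Suc i) w) @ ([False, True] @ r)))"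
      using dr[of i] that by simp
    then show ?thesis by (simp only: dbl_cons)
  qed
  have d2: "\<not> dbl (dropc (2 * length w) (N ?s))"
    using dr[of "length w"] dbl_cons[of False True r] by simp
  show j: "j0 (N ?s) = length w"
    unfolding j0_def
    apply (rule Least_equality)
    using d2 apply simp
    using d1 not_less by blast
  have "map (\<lambda>i. S (N [bitc (dropc (2 * i) (N ?s))])) [0..<length w] = map (\<lambda>b. [b]) w"
  proof (rule nth_equalityI)
    fix i assume "i < length (map (\<lambda>i. S (N [bitc (dropc (2 * i) (N ?s))])) [0..<length w])"
    then have i: "i < length w" by simp
    have "drop i w = w ! i # drop (Suc i) w" using i by (rule Cons_nth_drop_Suc[symmetric])
    then have "dropc (2 * i) (N ?s) = N (w ! i # w ! i # (dbls (drop (Suc i) w) @ ([False, True] @ r)))"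
      using dr[of i] i by simp
    then show "map (\<lambda>i. S (N [bitc (dropc (2 * i) (N ?s))])) [0..<length w] ! i = map (\<lambda>b. [b]) w ! i"
      using i by (simp del: nat_of_str.simps add: bitc_N)
  qed simp
  moreover have "concat (map (\<lambda>b. [b]) w) = w" by (induction w) auto
  ultimately show "firstc (N ?s) = N w" unfolding firstc_def catc_def j by simp
  have "drop (2 * length w) ?s = [False, True] @ r"
    using drop_dbls[of "length w" w "[False, True] @ r"] sd by simp
  then have "drop 2 (drop (2 * length w) ?s) = r" by simp
  then have "drop (2 * length w + 2) ?s = r" by (simp only: drop_drop add.commute)
  then show "restc (N ?s) = N r" unfolding restc_def j by (metis N_drop)
qed

lemma dropc_zero: "dropc k 0 = 0"
  using N_drop[of k "[]"] by simp

lemma dropc_large: "s \<le> k \<Longrightarrow> dropc k s = 0"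
  using N_drop[of k "S s"] N_ge_length[of "S s"] by simp

lemma j0_ex: "\<exists>j. \<not> dbl (dropc (2 * j) s)"
  by (rule exI[of _ s]) (simp add: dropc_large dbl_def)

lemma R_dbl[rp]: "rep T k a \<Longrightarrow> repP T k (\<lambda>q xs. dbl (a q xs))"
  unfolding dbl_def by (intro rp)

lemma R_j00: "rep T 1 (\<lambda>q xs. j0 (xs!0))"
  unfolding j0_def
  apply (rule R_least1[where P="\<lambda>q y a. \<not> dbl (dropc (2 * y) a)"])
   apply (intro rp; simp)
  using j0_ex by blast
lemma R_j0[rp]: "rep T k a \<Longrightarrow> rep T k (\<lambda>q xs. j0 (a q xs))"
  by (rule lift1[OF R_j00])

lemma R_first0: "rep T 1 (\<lambda>q xs. firstc (xs!0))"
proof -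
  have "rep T 2 (\<lambda>q xs. catc (\<lambda>i. (\<lambda>q i s. N [bitc (dropc (2 * i) s)]) q i (xs!1)) (xs!0))"
    by (rule R_cat) (unfold N1, intro rp; simp)
  then have "rep T 1 (\<lambda>q xs. (\<lambda>q a b. catc (\<lambda>i. N [bitc (dropc (2 * i) b)]) a) q (j0 (xs!0)) (xs!0))"
    by (rule lift2) (intro rp; simp)+
  then show ?thesis unfolding firstc_def by simp
qed
lemma R_first[rp]: "rep T k a \<Longrightarrow> rep T k (\<lambda>q xs. firstc (a q xs))"
  by (rule lift1[OF R_first0])

lemma R_rest[rp]: "rep T k a \<Longrightarrow> rep T k (\<lambda>q xs. restc (a q xs))"
  unfolding restc_def by (intro rp)



lemma P_iff[rp]: "repP T k P \<Longrightarrow> repP T k Q \<Longrightarrow> repP T k (\<lambda>q xs. P q xs = Q q xs)"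
proof -
  assume "repP T k P" "repP T k Q"
  then have "repP T k (\<lambda>q xs. (if P q xs then 0 else 1) = (if Q q xs then 0 else (1::nat)))"
    unfolding repP_def[of T k P] repP_def[of T k Q] by (rule P_eq)
  then show ?thesis unfolding repP_def by (rule R_cong) auto
qed

section \<open>Lexicographic comparison\<close>

definition stp :: "nat \<Rightarrow> nat \<Rightarrow> nat \<Rightarrow> nat" where
  "stp da db z = (if da = 0 then (if db = 0 then 0 else 1) else if db = 0 then 0
     else if bitc da = bitc db then z else if bitc db then 1 else 0)"

lemma stp_N: "stp (N xs) (N ys) (if tl xs < tl ys then 1 else 0) = (if xs < ys then 1 else 0)"
  by (cases xs; cases ys) (auto simp del: nat_of_str.simps simp: stp_def bitc_N)

fun lsr :: "nat \<Rightarrow> nat \<Rightarrow> nat \<Rightarrow> nat" where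
  "lsr 0 a b = 0"
| "lsr (Suc j) a b = stp (dropc (a + b - Suc j) a) (dropc (a + b - Suc j) b) (lsr j a b)"

lemma lsr_eq: "j \<le> a + b \<Longrightarrow> lsr j a b = (if drop (a + b - j) (S a) < drop (a + b - j) (S b) then 1 else 0)"
proof (induction j)
  case 0
  have "drop (a + b) (S a) = []" "drop (a + b) (S b) = []"
    using N_ge_length[of "S a"] N_ge_length[of "S b"] by auto
  then show ?case by simp
next
  case (Suc j)
  let ?k = "a + b - Suc j"
  have k: "a + b - j = Suc ?k" using Suc.prems by simp
  have t: "drop (Suc ?k) l = tl (drop ?k l)" for l :: str by (simp add: drop_Suc drop_tl)
  have "lsr (Suc j) a b = stp (N (drop ?k (S a))) (N (drop ?k (S b))) (lsr j a b)"
    by (simp add: N_drop)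
  also have "lsr j a b = (if tl (drop ?k (S a)) < tl (drop ?k (S b)) then 1 else 0)"
    using Suc k t by simp
  finally show ?case using stp_N by simp
qed

definition lessc :: "nat \<Rightarrow> nat \<Rightarrow> nat" where "lessc a b = lsr (a + b) a b"

lemma lessc_eq: "lessc a b = (if S a < S b then 1 else 0)"
  unfolding lessc_def using lsr_eq[of "a + b" a b] by simp

lemma R_stp[rp]: "rep T k a \<Longrightarrow> rep T k b \<Longrightarrow> rep T k c \<Longrightarrow> rep T k (\<lambda>q xs. stp (a q xs) (b q xs) (c q xs))"
  unfolding stp_def by (intro rp)

lemma R_lessc0: "rep T 2 (\<lambda>q xs. lessc (xs!0) (xs!1))"
proof -
  have "rep T 3 (\<lambda>q xs. (\<lambda>q j a b. lsr j a b) q (xs!0) (xs!1) (xs!2))"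
    apply (rule R_rec3[where g="\<lambda>q a b. 0" and h="\<lambda>q n z a b. stp (dropc (a + b - Suc n) a) (dropc (a + b - Suc n) b) z"])
    apply (intro rp; simp)+
    by simp_all
  then have "rep T 2 (\<lambda>q xs. (\<lambda>q j a b. lsr j a b) q (xs!0 + xs!1) (xs!0) (xs!1))"
    by (rule lift3) (intro rp; simp)+
  then show ?thesis unfolding lessc_def by simp
qed

lemma P_sless[rp]: "rep T k a \<Longrightarrow> rep T k b \<Longrightarrow> repP T k (\<lambda>q xs. S (a q xs) < S (b q xs))"
  unfolding repP_def
  apply (rule R_cong[where g="\<lambda>q xs. 1 - lessc (a q xs) (b q xs)"])
   apply (intro rp lift2[OF R_lessc0]; assumption)
  by (simp add: lessc_eq)

section \<open>Lists of self-delimited strings\<close>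

definition rsti :: "nat \<Rightarrow> nat \<Rightarrow> nat" where "rsti i L = (restc ^^ i) L"
definition eltc :: "nat \<Rightarrow> nat \<Rightarrow> nat" where "eltc i L = firstc (rsti i L)"
definition okc :: "nat \<Rightarrow> nat \<Rightarrow> bool" where "okc i L \<longleftrightarrow> rsti i L \<noteq> 0"
definition Elems :: "nat \<Rightarrow> nat set" where "Elems L = {eltc i L | i. i < L \<and> okc i L}"
definition encl :: "str list \<Rightarrow> nat" where "encl ws = N (concat (map self_delim ws))"

lemma R_rsti0: "rep T 2 (\<lambda>q xs. rsti (xs!0) (xs!1))"
  apply (rule R_rec2[where g="\<lambda>q a. a" and h="\<lambda>q n z a. restc z"])
  apply (intro rp; simp)+
  by (simp_all add: rsti_def)
lemma R_rsti[rp]: "rep T k a \<Longrightarrow> rep T k b \<Longrightarrow> rep T k (\<lambda>q xs. rsti (a q xs) (b q xs))"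
  by (rule lift2[OF R_rsti0])
lemma R_eltc[rp]: "rep T k a \<Longrightarrow> rep T k b \<Longrightarrow> rep T k (\<lambda>q xs. eltc (a q xs) (b q xs))"
  unfolding eltc_def by (intro rp)
lemma R_okc[rp]: "rep T k a \<Longrightarrow> rep T k b \<Longrightarrow> repP T k (\<lambda>q xs. okc (a q xs) (b q xs))"
  unfolding okc_def by (intro rp)

lemma restc_zero: "restc 0 = 0" by (simp add: restc_def dropc_zero)

lemma rsti_zero: "rsti i 0 = 0"
  by (induction i) (auto simp: rsti_def restc_zero)

lemma self_delim_ne: "self_delim w \<noteq> []" by (simp add: self_delim_def)

lemma rsti_encl: "i \<le> length ws \<Longrightarrow> rsti i (encl ws) = encl (drop i ws)"
proof (induction i)
  case 0 then show ?case by (simp add: rsti_def)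
next
  case (Suc i)
  have d: "drop i ws = ws ! i # drop (Suc i) ws" using Suc.prems by (simp add: Cons_nth_drop_Suc)
  have "rsti (Suc i) (encl ws) = restc (rsti i (encl ws))" by (simp add: rsti_def)
  also have "... = restc (N (self_delim (ws ! i) @ concat (map self_delim (drop (Suc i) ws))))"
    using Suc d by (simp add: encl_def)
  also have "... = encl (drop (Suc i) ws)" by (simp add: parse_sd encl_def)
  finally show ?case .
qed

lemma rsti_encl_large: "length ws \<le> i \<Longrightarrow> rsti i (encl ws) = 0"
proof -
  assume "length ws \<le> i"
  then obtain d where i: "i = length ws + d" by (metis le_add_diff_inverse)
  have "rsti (length ws) (encl ws) = 0" using rsti_encl[of "length ws" ws] by (simp add: encl_def)
  then have "rsti (length ws + d) (encl ws) = 0"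
    by (induction d) (auto simp: rsti_def restc_zero)
  then show ?thesis using i by simp
qed

lemma eltc_encl: "i < length ws \<Longrightarrow> eltc i (encl ws) = N (ws ! i) \<and> okc i (encl ws)"
proof -
  assume i: "i < length ws"
  have d: "drop i ws = ws ! i # drop (Suc i) ws" using i by (simp add: Cons_nth_drop_Suc)
  have "rsti i (encl ws) = N (self_delim (ws ! i) @ concat (map self_delim (drop (Suc i) ws)))"
    using rsti_encl[of i ws] i d by (simp add: encl_def)
  then show ?thesis unfolding eltc_def okc_def using self_delim_ne by (simp add: parse_sd)
qed

lemma length_le_encl: "length ws \<le> encl ws"
proof -
  have "length ws \<le> length (concat (map self_delim ws))"
  proof (induction ws)
    case (Cons w ws)
    then show ?case using self_delim_ne[of w] by (cases "self_delim w") auto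
  qed simp
  then show ?thesis unfolding encl_def using N_ge_length le_trans by blast
qed

lemma Elems_encl: "Elems (encl ws) = N ` set ws"
proof
  show "Elems (encl ws) \<subseteq> N ` set ws"
  proof
    fix e assume "e \<in> Elems (encl ws)"
    then obtain i where e: "e = eltc i (encl ws)" and ok: "okc i (encl ws)" unfolding Elems_def by auto
    have "i < length ws" using ok rsti_encl_large[of ws i] unfolding okc_def by (meson not_le)
    then show "e \<in> N ` set ws" using e eltc_encl by auto
  qed
  show "N ` set ws \<subseteq> Elems (encl ws)"
  proof
    fix e assume "e \<in> N ` set ws"
    then obtain i where i: "i < length ws" and e: "e = N (ws ! i)" by (auto simp: in_set_conv_nth)
    have "i < encl ws" using i length_le_encl[of ws] by simp
    then show "e \<in> Elems (encl ws)" unfolding Elems_def using eltc_encl[OF i] e by (metis (mono_tags, lifting) mem_Collect_eq)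
  qed
qed

lemma finite_Elems: "finite (Elems L)"
  unfolding Elems_def by simp



fun mgl :: "nat \<Rightarrow> nat \<Rightarrow> nat \<Rightarrow> nat" where
  "mgl 0 lo L = 0"
| "mgl (Suc k) lo L = (if okc k L \<and> (lo = 0 \<or> S (lo - 1) < S (eltc k L)) \<and>
        (mgl k lo L = 0 \<or> S (eltc k L) < S (mgl k lo L - 1)) then eltc k L + 1 else mgl k lo L)"

definition Cset :: "nat \<Rightarrow> nat \<Rightarrow> nat \<Rightarrow> str set" where
  "Cset k lo L = {S (eltc i L) | i. i < k \<and> okc i L \<and> (lo = 0 \<or> S (lo - 1) < S (eltc i L))}"

lemma Cset_Suc: "Cset (Suc k) lo L = Cset k lo L \<union>
   (if okc k L \<and> (lo = 0 \<or> S (lo - 1) < S (eltc k L)) then {S (eltc k L)} else {})"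
  unfolding Cset_def by (auto simp: less_Suc_eq)

lemma finite_Cset: "finite (Cset k lo L)"
proof -
  have "Cset k lo L \<subseteq> (\<lambda>i. S (eltc i L)) ` {..<k}" unfolding Cset_def by auto
  then show ?thesis by (rule finite_subset) simp
qed

lemma mgl_eq: "mgl k lo L = (if Cset k lo L = {} then 0 else N (Min (Cset k lo L)) + 1)"
proof (induction k)
  case 0 then show ?case by (simp add: Cset_def)
next
  case (Suc k)
  let ?C = "Cset k lo L" and ?c = "okc k L \<and> (lo = 0 \<or> S (lo - 1) < S (eltc k L))"
  show ?case
  proof (cases ?c)
    case False
    have e1: "Cset (Suc k) lo L = ?C" unfolding Cset_Suc if_not_P[OF False] by simp
    have "mgl (Suc k) lo L = (if ?c \<and> (mgl k lo L = 0 \<or> S (eltc k L) < S (mgl k lo L - 1)) then eltc k L + 1 else mgl k lo L)"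
      by (simp only: mgl.simps(2) conj_assoc)
    also have "... = mgl k lo L" using False by (metis (full_types))
    finally show ?thesis using Suc e1 by simp
  next
    case c: True
    show ?thesis
    proof (cases "?C = {}")
      case True
      then show ?thesis using Suc c by (simp add: Cset_Suc)
    next
      case ne: False
      have fin: "finite ?C" by (rule finite_Cset)
      have m: "mgl k lo L = N (Min ?C) + 1" using Suc ne by simp
      have "Min (insert (S (eltc k L)) ?C) = min (S (eltc k L)) (Min ?C)"
        using fin ne by (rule Min_insert)
      then show ?thesis using Suc.IH c ne m by (auto simp: Cset_Suc min_def)
    qed
  qed
qed

definition mg :: "nat \<Rightarrow> nat \<Rightarrow> nat" where "mg lo L = mgl L lo L"

lemma Cset_L: "Cset L lo L = {e \<in> S ` Elems L. lo = 0 \<or> S (lo - 1) < e}"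
  unfolding Cset_def Elems_def by auto

fun pk :: "nat \<Rightarrow> nat \<Rightarrow> nat" where
  "pk 0 L = mg 0 L"
| "pk (Suc i) L = (if pk i L = 0 then 0 else mg (pk i L) L)"

definition sortenc :: "nat \<Rightarrow> nat" where
  "sortenc L = catc (\<lambda>i. if pk i L = 0 then 0 else sdc (pk i L - 1)) L"

lemma sorted_gt: assumes "sorted_wrt (<) (xs :: 'a :: linorder list)" "i < length xs"
  shows "{e \<in> set xs. xs ! i < e} = set (drop (Suc i) xs)"
proof
  show "{e \<in> set xs. xs ! i < e} \<subseteq> set (drop (Suc i) xs)"
  proof
    fix e assume "e \<in> {e \<in> set xs. xs ! i < e}"
    then obtain j where j: "j < length xs" "e = xs ! j" "xs ! i < xs ! j" by (auto simp: in_set_conv_nth)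
    have "i < j"
    proof (rule ccontr)
      assume "\<not> i < j"
      then have "j = i \<or> j < i" by auto
      then show False using j sorted_wrt_nth_less[OF assms(1), of j i] assms(2) by auto
    qed
    then show "e \<in> set (drop (Suc i) xs)" using j
      by (auto simp: in_set_conv_nth intro!: exI[of _ "j - Suc i"])
  qed
  show "set (drop (Suc i) xs) \<subseteq> {e \<in> set xs. xs ! i < e}"
  proof
    fix e assume "e \<in> set (drop (Suc i) xs)"
    then obtain j where j: "j < length xs - Suc i" "e = xs ! (Suc i + j)" by (auto simp: in_set_conv_nth)
    then show "e \<in> {e \<in> set xs. xs ! i < e}"
      using sorted_wrt_nth_less[OF assms(1), of i "Suc i + j"] by auto
  qed
qed

lemma sorted_Min: assumes "sorted_wrt (<) (ys :: 'a :: linorder list)" "ys \<noteq> []"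
  shows "Min (set ys) = hd ys"
proof -
  obtain y zs where ys: "ys = y # zs" using assms(2) by (cases ys) auto
  have "\<And>b. b \<in> set zs \<Longrightarrow> y \<le> b" using assms(1) ys by auto
  then show ?thesis using ys by (simp add: Min_insert2)
qed

lemma sortenc_eq: "sortenc L = N (enc_set (S ` Elems L))"
proof -
  define E where "E = S ` Elems L"
  define xs where "xs = sorted_list_of_set E"
  have fin: "finite E" unfolding E_def by (simp add: finite_Elems)
  have sxs: "set xs = E" and str: "sorted_wrt (<) xs" and lxs: "length xs = card E"
    unfolding xs_def using fin by (auto simp: sorted_list_of_set.strict_sorted_key_list_of_set[of E, simplified])
  have mL: "card E \<le> L"
  proof -
    have "E \<subseteq> (\<lambda>i. S (eltc i L)) ` {..<L}" unfolding E_def Elems_def by auto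
    then have "card E \<le> card {..<L}" by (meson card_image_le card_mono finite_imageI finite_lessThan le_trans)
    then show ?thesis by simp
  qed
  have mg_eq: "mg lo L = (if {e \<in> E. lo = 0 \<or> S (lo - 1) < e} = {} then 0 else N (Min {e \<in> E. lo = 0 \<or> S (lo - 1) < e}) + 1)" for lo
    unfolding mg_def mgl_eq Cset_L E_def ..
  have pk_eq: "pk i L = (if i < length xs then N (xs ! i) + 1 else 0)" for i
  proof (induction i)
    case 0
    show ?case
    proof (cases "xs = []")
      case True then show ?thesis using sxs mg_eq[of 0] by simp
    next
      case False
      then have "Min E = xs ! 0" using sorted_Min[OF str] sxs by (simp add: hd_conv_nth)
      then show ?thesis using False sxs mg_eq[of 0] by auto
    qed
  next
    case (Suc i)
    show ?case
    proof (cases "i < length xs")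
      case False then show ?thesis using Suc by simp
    next
      case True
      have g: "{e \<in> E. xs ! i < e} = set (drop (Suc i) xs)" using sorted_gt[OF str True] sxs by simp
      have "pk (Suc i) L = mg (N (xs ! i) + 1) L" using Suc True by simp
      also have "... = (if set (drop (Suc i) xs) = {} then 0 else N (Min (set (drop (Suc i) xs))) + 1)"
        using mg_eq[of "N (xs ! i) + 1"] g by simp
      also have "... = (if Suc i < length xs then N (xs ! Suc i) + 1 else 0)"
      proof (cases "Suc i < length xs")
        case True
        have "sorted_wrt (<) (drop (Suc i) xs)" using str by (rule sorted_wrt_drop)
        then have "Min (set (drop (Suc i) xs)) = xs ! Suc i"
          using True sorted_Min[of "drop (Suc i) xs"] by (simp add: hd_drop_conv_nth)
        then show ?thesis using True by simp
      qed simp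
      finally show ?thesis .
    qed
  qed
  have "map (\<lambda>i. S (if pk i L = 0 then 0 else sdc (pk i L - 1))) [0..<L]
      = map (\<lambda>i. self_delim (xs ! i)) [0..<length xs] @ map (\<lambda>i. []) [length xs..<L]"
  proof -
    have "[0..<L] = [0..<length xs] @ [length xs..<L]" using mL lxs by (metis le0 upt_add_eq_append le_add_diff_inverse)
    then show ?thesis by (simp add: pk_eq sdc_N)
  qed
  have "concat (map (\<lambda>i. S (if pk i L = 0 then 0 else sdc (pk i L - 1))) [0..<L]) = concat (map self_delim xs)"
  proof -
    have "map (\<lambda>i. self_delim (xs ! i)) [0..<length xs] = map self_delim xs"
      by (rule nth_equalityI) auto
    moreover have "concat (map (\<lambda>i. []::str) [length xs..<L]) = []" by simp
    ultimately show ?thesis using \<open>map (\<lambda>i. S (if pk i L = 0 then 0 else sdc (pk i L - 1))) [0..<L]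
      = map (\<lambda>i. self_delim (xs ! i)) [0..<length xs] @ map (\<lambda>i. []) [length xs..<L]\<close> by simp
  qed
  then show ?thesis unfolding sortenc_def catc_def enc_set_def xs_def E_def by simp
qed

lemma R_mgl0: "rep T 3 (\<lambda>q xs. mgl (xs!0) (xs!1) (xs!2))"
  apply (rule R_rec3[where f="\<lambda>q. mgl" and g="\<lambda>q a b. 0" and h="\<lambda>q k z lo L. (if okc k L \<and> (lo = 0 \<or> S (lo - 1) < S (eltc k L)) \<and>
        (z = 0 \<or> S (eltc k L) < S (z - 1)) then eltc k L + 1 else z)"])
  apply (intro rp; simp)+
  by simp_all

lemma R_mg[rp]: "rep T k a \<Longrightarrow> rep T k b \<Longrightarrow> rep T k (\<lambda>q xs. mg (a q xs) (b q xs))"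
  unfolding mg_def by (rule lift3[OF R_mgl0])

lemma R_pk0: "rep T 2 (\<lambda>q xs. pk (xs!0) (xs!1))"
  apply (rule R_rec2[where f="\<lambda>q. pk" and g="\<lambda>q L. mg 0 L" and h="\<lambda>q n z L. if z = 0 then 0 else mg z L"])
  apply (intro rp; simp)+
  by simp_all

lemma R_pk[rp]: "rep T k a \<Longrightarrow> rep T k b \<Longrightarrow> rep T k (\<lambda>q xs. pk (a q xs) (b q xs))"
  by (rule lift2[OF R_pk0])

lemma R_sortenc0: "rep T 1 (\<lambda>q xs. sortenc (xs!0))"
proof -
  have "rep T 2 (\<lambda>q xs. catc (\<lambda>i. (\<lambda>q i L. if pk i L = 0 then 0 else sdc (pk i L - 1)) q i (xs!1)) (xs!0))"
    by (rule R_cat) (intro rp; simp)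
  then have "rep T 1 (\<lambda>q xs. (\<lambda>q a b. catc (\<lambda>i. if pk i b = 0 then 0 else sdc (pk i b - 1)) a) q (xs!0) (xs!0))"
    by (rule lift2) (intro rp; simp)+
  then show ?thesis unfolding sortenc_def by simp
qed

lemma R_sortenc[rp]: "rep T k a \<Longrightarrow> rep T k (\<lambda>q xs. sortenc (a q xs))"
  by (rule lift1[OF R_sortenc0])



definition filt :: "(nat \<Rightarrow> nat \<Rightarrow> nat) \<Rightarrow> nat \<Rightarrow> nat \<Rightarrow> nat" where
  "filt dd p t = catc (\<lambda>i. if okc i t \<and> dd p (eltc i t) = t then sdc (eltc i t) else 0) t"

definition Fac :: "(nat \<Rightarrow> nat \<Rightarrow> nat) \<Rightarrow> nat \<Rightarrow> nat \<Rightarrow> nat" where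
  "Fac dd p t = sortenc (filt dd p t)"

definition cand :: "(nat \<Rightarrow> nat \<Rightarrow> nat) \<Rightarrow> nat \<Rightarrow> nat \<Rightarrow> nat" where
  "cand dd p n = catc (\<lambda>i. sdc (Fac dd p (dd p (2 ^ n - 1 + i)))) (2 ^ n)"

definition Fd :: "(nat \<Rightarrow> nat \<Rightarrow> nat) \<Rightarrow> nat \<Rightarrow> nat \<Rightarrow> nat" where
  "Fd dd p n = sortenc (cand dd p n)"

lemma concat_map_if: "concat (map (\<lambda>i. if P i then f i else []) xs) = concat (map f (filter P xs))"
  by (induction xs) auto

lemma S_sdc: "S (sdc e) = self_delim (S e)"
  using sdc_N[of "S e"] by (metis N_S S_N)

lemma filt_encl: "filt dd p t = encl (map (\<lambda>i. S (eltc i t)) (filter (\<lambda>i. okc i t \<and> dd p (eltc i t) = t) [0..<t]))"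
proof -
  have "map (\<lambda>i. S (if okc i t \<and> dd p (eltc i t) = t then sdc (eltc i t) else 0)) [0..<t]
      = map (\<lambda>i. if okc i t \<and> dd p (eltc i t) = t then self_delim (S (eltc i t)) else []) [0..<t]"
    by (auto simp: S_sdc)
  then have "concat (map (\<lambda>i. S (if okc i t \<and> dd p (eltc i t) = t then sdc (eltc i t) else 0)) [0..<t])
     = concat (map (\<lambda>i. self_delim (S (eltc i t))) (filter (\<lambda>i. okc i t \<and> dd p (eltc i t) = t) [0..<t]))"
    by (simp only: concat_map_if)
  also have "... = concat (map self_delim (map (\<lambda>i. S (eltc i t)) (filter (\<lambda>i. okc i t \<and> dd p (eltc i t) = t) [0..<t])))"
    by (simp add: comp_def)
  finally show ?thesis unfolding filt_def catc_def encl_def by simp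
qed

lemma Elems_filt: "Elems (filt dd p t) = {e \<in> Elems t. dd p e = t}"
proof -
  have "Elems (filt dd p t) = N ` set (map (\<lambda>i. S (eltc i t)) (filter (\<lambda>i. okc i t \<and> dd p (eltc i t) = t) [0..<t]))"
    by (simp only: filt_encl Elems_encl)
  also have "... = {eltc i t | i. i < t \<and> okc i t \<and> dd p (eltc i t) = t}"
    by (auto simp: image_iff)
  also have "... = {e \<in> Elems t. dd p e = t}"
    unfolding Elems_def by blast
  finally show ?thesis .
qed

definition Pset :: "(nat \<Rightarrow> nat \<Rightarrow> nat) \<Rightarrow> nat \<Rightarrow> nat \<Rightarrow> str set" where
  "Pset dd p t = S ` {e \<in> Elems t. dd p e = t}"

lemma Fac_eq: "Fac dd p t = N (enc_set (Pset dd p t))"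
  unfolding Fac_def Pset_def by (simp add: sortenc_eq Elems_filt)

lemma img_shift: "{m..<m+k} = (\<lambda>i. m + i) ` {0..<(k::nat)}"
proof
  show "{m..<m + k} \<subseteq> (\<lambda>i. m + i) ` {0..<k}"
  proof
    fix x assume "x \<in> {m..<m + k}"
    then have "x = m + (x - m)" "x - m \<in> {0..<k}" by auto
    then show "x \<in> (\<lambda>i. m + i) ` {0..<k}" by (rule image_eqI)
  qed
qed auto

lemma Elems_cand: "Elems (cand dd p n) = (\<lambda>z. Fac dd p (dd p z)) ` {2 ^ n - 1 ..< 2 ^ n - 1 + 2 ^ n}"
proof -
  have "cand dd p n = encl (map (\<lambda>i. S (Fac dd p (dd p (2 ^ n - 1 + i)))) [0..<2 ^ n])"
    unfolding cand_def catc_def encl_def by (simp add: S_sdc comp_def)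
  then have "Elems (cand dd p n) = (\<lambda>i. Fac dd p (dd p (2 ^ n - 1 + i))) ` {0..<2 ^ n}"
    by (simp add: Elems_encl image_image)
  also have "... = (\<lambda>z. Fac dd p (dd p z)) ` {2 ^ n - 1 ..< 2 ^ n - 1 + 2 ^ n}"
  proof -
    have "{2 ^ n - 1 ..< 2 ^ n - 1 + 2 ^ n} = (\<lambda>i. 2 ^ n - 1 + i) ` {0..<(2::nat) ^ n}"
      by (rule img_shift)
    then show ?thesis by (simp only: image_image)
  qed
  finally show ?thesis .
qed

lemma Fd_eq: "Fd dd p n = N (enc_set (enc_set ` (\<lambda>z. Pset dd p (dd p z)) ` {2 ^ n - 1 ..< 2 ^ n - 1 + 2 ^ n}))"
proof -
  have "S ` Elems (cand dd p n) = enc_set ` (\<lambda>z. Pset dd p (dd p z)) ` {2 ^ n - 1 ..< 2 ^ n - 1 + 2 ^ n}"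
    unfolding Elems_cand by (auto simp: Fac_eq image_image)
  then show ?thesis unfolding Fd_def by (simp add: sortenc_eq)
qed

locale orc =
  fixes fD :: recf and dd :: "nat \<Rightarrow> nat \<Rightarrow> nat" and TD :: "nat \<Rightarrow> bool"
    and T :: "nat \<Rightarrow> bool" and Ox :: "nat \<Rightarrow> nat"
  assumes orc: "\<And>c b. TD c \<Longrightarrow> eval fD [c, b] (dd c b)"
    and TO: "\<And>q. T q \<Longrightarrow> TD (Ox q)"
    and RO: "\<And>k. rep T k (\<lambda>q xs. Ox q)"
begin

lemma R_ddO[rp]: "rep T k b \<Longrightarrow> rep T k (\<lambda>q xs. dd (Ox q) (b q xs))"
  by (rule R_orc[where TD=TD, OF orc RO]) (auto simp: TO)

lemma R_filt0: "rep T 1 (\<lambda>q xs. filt dd (Ox q) (xs!0))"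
proof -
  have "rep T 2 (\<lambda>q xs. catc (\<lambda>i. (\<lambda>q i t. if okc i t \<and> dd (Ox q) (eltc i t) = t then sdc (eltc i t) else 0) q i (xs!1)) (xs!0))"
    by (rule R_cat) (intro rp; simp)
  then have "rep T 1 (\<lambda>q xs. (\<lambda>q a b. catc (\<lambda>i. if okc i b \<and> dd (Ox q) (eltc i b) = b then sdc (eltc i b) else 0) a) q (xs!0) (xs!0))"
    by (rule lift2) (intro rp; simp)+
  then show ?thesis unfolding filt_def by simp
qed

lemma R_filt[rp]: "rep T k a \<Longrightarrow> rep T k (\<lambda>q xs. filt dd (Ox q) (a q xs))"
  by (rule lift1[OF R_filt0])

lemma R_Fac[rp]: "rep T k a \<Longrightarrow> rep T k (\<lambda>q xs. Fac dd (Ox q) (a q xs))"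
  unfolding Fac_def by (intro rp)

lemma R_cand0: "rep T 1 (\<lambda>q xs. cand dd (Ox q) (xs!0))"
proof -
  have "rep T 2 (\<lambda>q xs. catc (\<lambda>i. (\<lambda>q i n. sdc (Fac dd (Ox q) (dd (Ox q) (2 ^ n - 1 + i)))) q i (xs!1)) (xs!0))"
    by (rule R_cat) (intro rp; simp)
  then have "rep T 1 (\<lambda>q xs. (\<lambda>q a b. catc (\<lambda>i. sdc (Fac dd (Ox q) (dd (Ox q) (2 ^ b - 1 + i)))) a) q (2 ^ (xs!0)) (xs!0))"
    by (rule lift2) (intro rp; simp)+
  then show ?thesis unfolding cand_def by simp
qed

lemma R_Fd[rp]: "rep T k a \<Longrightarrow> rep T k (\<lambda>q xs. Fd dd (Ox q) (a q xs))"
  unfolding Fd_def by (intro rp lift1[OF R_cand0])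

end



inductive_cases ZE: "eval Zf xs y"
inductive_cases SE: "eval Sf xs y"
inductive_cases ProjE: "eval (Proj i) xs y"
inductive_cases CompE: "eval (Comp f gs) xs y"
inductive_cases Prim0E: "eval (Prim g h) (0 # xs) y"
inductive_cases PrimSE: "eval (Prim g h) (Suc k # xs) y"
inductive_cases MnE: "eval (Mn f) xs y"

lemma eval_det: "eval f xs v \<Longrightarrow> eval f xs w \<Longrightarrow> v = w"
proof (induction arbitrary: w rule: eval.induct)
  case (eval_Z xs)
  then show ?case by (auto elim: ZE)
next
  case (eval_S x xs)
  then show ?case by (auto elim: SE)
next
  case (eval_Proj i xs)
  from eval_Proj.prems show ?case by (auto elim: ProjE)
next
  case (eval_Comp xs gs vs f y)
  from eval_Comp.prems obtain vs' where a: "list_all2 (\<lambda>g v. eval g xs v) gs vs'" and b: "eval f vs' w"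
    by (rule CompE)
  have l: "length vs = length vs'"
    using list_all2_lengthD[OF eval_Comp.IH(1)] list_all2_lengthD[OF a] by simp
  have "vs = vs'"
  proof (rule nth_equalityI[OF l])
    fix i assume i: "i < length vs"
    then have i': "i < length gs" using list_all2_lengthD[OF eval_Comp.IH(1)] by simp
    have "eval (gs ! i) xs (vs ! i) \<and> (\<forall>x. eval (gs ! i) xs x \<longrightarrow> vs ! i = x)"
      using list_all2_nthD[OF eval_Comp.IH(1) i'] by simp
    moreover have "eval (gs ! i) xs (vs' ! i)" using list_all2_nthD[OF a i'] by simp
    ultimately show "vs ! i = vs' ! i" by blast
  qed
  then show ?case using eval_Comp.IH(2) b by simp
next
  case (eval_Prim0 g xs y h)
  from eval_Prim0.prems show ?case by (rule Prim0E) (rule eval_Prim0.IH)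
next
  case (eval_PrimS g h k xs z y)
  from eval_PrimS.prems obtain z' where "eval (Prim g h) (k # xs) z'" "eval h (k # z' # xs) w"
    by (rule PrimSE)
  then show ?case using eval_PrimS.IH by metis
next
  case (eval_Mn f y xs)
  from eval_Mn.prems obtain a: "eval f (w # xs) 0" and b: "\<forall>z<w. \<exists>v. eval f (z # xs) v \<and> 0 < v"
    by (rule MnE)
  show ?case
  proof (rule ccontr)
    assume "y \<noteq> w"
    then have "y < w \<or> w < y" by auto
    then show False
    proof
      assume "y < w"
      then obtain v where "eval f (y # xs) v" "0 < v" using b by blast
      then show False using eval_Mn.IH(1) by force
    next
      assume "w < y"
      then obtain v where "eval f (w # xs) v" "0 < v" "\<forall>u. eval f (w # xs) u \<longrightarrow> v = u"
        using eval_Mn.IH(2) by blast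
      then show False using a by force
    qed
  qed
qed

definition Fr :: "recf \<Rightarrow> str \<Rightarrow> str \<Rightarrow> str option" where
  "Fr r p x = (if \<exists>v. eval r [N p, N x] v then Some (S (THE v. eval r [N p, N x] v)) else None)"

lemma comp_Fr: "computable2 (Fr r)"
  unfolding computable2_def
proof (intro exI allI)
  fix p x y
  show "Fr r p x = Some y \<longleftrightarrow> eval r [N p, N x] (N y)"
  proof
    assume "Fr r p x = Some y"
    then have ex: "\<exists>v. eval r [N p, N x] v" and y: "y = S (THE v. eval r [N p, N x] v)"
      unfolding Fr_def by (auto split: if_splits)
    from ex obtain v where v: "eval r [N p, N x] v" by blast
    then have "(THE v. eval r [N p, N x] v) = v" using eval_det by blast
    then show "eval r [N p, N x] (N y)" using v y by simp
  next
    assume e: "eval r [N p, N x] (N y)"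
    then have "(THE v. eval r [N p, N x] v) = N y" using eval_det by blast
    then show "Fr r p x = Some y" using e unfolding Fr_def by auto
  qed
qed

lemma rep_Fr: assumes "rep T 1 g"
  shows "\<exists>r. \<forall>p x. T (N p) \<longrightarrow> Fr r p x = Some (S (g (N p) [N x]))"
proof -
  obtain r0 where r0: "\<And>q xs. T q \<Longrightarrow> length xs = 1 \<Longrightarrow> eval r0 (xs @ [q]) (g q xs)"
    using assms unfolding rep_def by blast
  have ev: "eval (Comp r0 [Proj 1, Proj 0]) [N p, N x] (g (N p) [N x])" if "T (N p)" for p x
    apply (rule eval_Comp[where vs="[N x, N p]"])
    using r0[OF that, of "[N x]"] by (auto intro: eval_Proj[of 1 "[N p, N x]", simplified] eval_Proj[of 0 "[N p, N x]", simplified])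
  show ?thesis
  proof (intro exI allI impI)
    fix p x assume T: "T (N p)"
    have "(THE v. eval (Comp r0 [Proj 1, Proj 0]) [N p, N x] v) = g (N p) [N x]"
      using ev[OF T] eval_det by blast
    then show "Fr (Comp r0 [Proj 1, Proj 0]) p x = Some (S (g (N p) [N x]))"
      using ev[OF T] unfolding Fr_def by auto
  qed
qed

lemma UL: assumes u: "universal_decompressor D" and r: "rep T 1 g"
  shows "\<exists>c. \<forall>p. T (N p) \<longrightarrow> (\<exists>q. length q \<le> length p + c \<and> (\<forall>x. D q x = Some (S (g (N p) [N x]))))"
proof -
  obtain r0 where r0: "\<And>p x. T (N p) \<Longrightarrow> Fr r0 p x = Some (S (g (N p) [N x]))"
    using rep_Fr[OF r] by blast
  obtain c where c: "\<And>p. \<exists>q. length q \<le> length p + c \<and> (\<forall>x. D q x = Fr r0 p x)"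
    using u comp_Fr[of r0] unfolding universal_decompressor_def by blast
  show ?thesis
  proof (rule exI[of _ c], intro allI impI)
    fix p assume T: "T (N p)"
    obtain q where "length q \<le> length p + c" "\<forall>x. D q x = Fr r0 p x" using c by blast
    then show "\<exists>q. length q \<le> length p + c \<and> (\<forall>x. D q x = Some (S (g (N p) [N x])))"
      using r0[OF T] by auto
  qed
qed

lemma CT_le: "(\<forall>z. D q z \<noteq> None) \<Longrightarrow> D q x = Some y \<Longrightarrow> CT D y x \<le> length q"
  unfolding CT_def by (rule Least_le) blast

lemma KC_le: "D q [] = Some y \<Longrightarrow> KC D y \<le> length q"
  unfolding KC_def by (rule Least_le) blast

lemma CT_wit: assumes u: "universal_decompressor D"
  shows "\<exists>p. length p = CT D y x \<and> (\<forall>z. D p z \<noteq> None) \<and> D p x = Some y"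
proof -
  obtain c where c: "\<And>p. True \<Longrightarrow> (\<exists>q. length q \<le> length p + c \<and> (\<forall>x. D q x = Some (S ((\<lambda>q xs. N y) (N p) [N x]))))"
    using UL[OF u R_const[of "\<lambda>q. True" 1 "N y"]] by blast
  obtain q where q: "\<forall>x. D q x = Some y" using c[of "[]"] by auto
  have "\<exists>k p. length p = k \<and> (\<forall>z. D p z \<noteq> None) \<and> D p x = Some y"
    using q by blast
  from LeastI_ex[OF this] show ?thesis unfolding CT_def by blast
qed

lemma N_plus1_ge: "2 ^ length w \<le> N w + 1"
  by (induction w) auto

lemma len_log: "real (length (S n)) \<le> log 2 (real n + 2)"
proof -
  have "2 ^ length (S n) \<le> n + 1" using N_plus1_ge[of "S n"] by simp
  then have "real (2 ^ length (S n)) \<le> real (n + 1)" by (simp only: of_nat_le_iff)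
  then have "(2::real) ^ length (S n) \<le> real n + 2" by simp
  then have "log 2 ((2::real) ^ length (S n)) \<le> log 2 (real n + 2)"
    by (subst log_le_cancel_iff) auto
  then show ?thesis by (simp add: log_nat_power)
qed



lemma N_plus2_le: "N w + 2 \<le> 2 ^ (length w + 1)"
  by (induction w) auto

lemma length_self_delim: "length (self_delim w) = 2 * length w + 2"
  unfolding self_delim_def by (induction w) auto

lemma S_inj: "S a = S b \<longleftrightarrow> a = b" by (metis N_S)

lemma Pset_disj: "w \<in> Pset dd p s1 \<Longrightarrow> w \<in> Pset dd p s2 \<Longrightarrow> s1 = s2"
  unfolding Pset_def by (auto simp: S_inj)

lemma part_Pset: "is_partition (Pset dd p ` X)"
  unfolding is_partition_def
proof (intro ballI impI)
  fix B1 B2 assume "B1 \<in> Pset dd p ` X" "B2 \<in> Pset dd p ` X" "B1 \<inter> B2 \<noteq> {}"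
  then obtain s1 s2 w where "B1 = Pset dd p s1" "B2 = Pset dd p s2" "w \<in> B1" "w \<in> B2" by blast
  then show "B1 = B2" using Pset_disj by metis
qed

lemma finite_Pset: "finite (Pset dd p s)"
  unfolding Pset_def using finite_Elems by simp

lemma img_NS: "S ` {e \<in> N ` A. P e} = {w \<in> A. P (N w)}"
proof
  show "S ` {e \<in> N ` A. P e} \<subseteq> {w \<in> A. P (N w)}" by auto
  show "{w \<in> A. P (N w)} \<subseteq> S ` {e \<in> N ` A. P e}"
  proof
    fix w assume "w \<in> {w \<in> A. P (N w)}"
    then have "w = S (N w)" "N w \<in> {e \<in> N ` A. P e}" by auto
    then show "w \<in> S ` {e \<in> N ` A. P e}" by (rule image_eqI)
  qed
qed

lemma encl_enc_set: "finite A \<Longrightarrow> N (enc_set A) = encl (sorted_list_of_set A)"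
  unfolding enc_set_def encl_def by simp

lemma Elems_enc_set: "finite A \<Longrightarrow> Elems (N (enc_set A)) = N ` A"
  by (simp add: encl_enc_set Elems_encl)

theorem lemma4:
  fixes D :: "str \<Rightarrow> str \<Rightarrow> str option"
  assumes "universal_decompressor D"
  shows "\<exists>c::real. \<forall>(n::nat) (x::str) (A::str set) (\<epsilon>::real).
    length x = n \<and> finite A \<and> x \<in> A \<and> real (CT D (enc_set A) x) \<le> \<epsilon> \<longrightarrow>
    (\<exists>A1 \<A>. finite A1 \<and> finite \<A> \<and> (\<forall>B\<in>\<A>. finite B) \<and> is_partition \<A> \<and>
       real (KC D (enc_family \<A>)) \<le> \<epsilon> + c * log 2 (real n + 2) \<and>
       x \<in> A1 \<and> real (CT D (enc_set A1) x) \<le> \<epsilon> + c * log 2 (real n + 2) \<and>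
       real (CT D (enc_set A) (enc_set A1)) < \<epsilon> + c * log 2 (real n + 2) \<and>
       real (CT D (enc_set A1) (enc_set A)) < \<epsilon> + c * log 2 (real n + 2) \<and>
       card A1 \<le> card A \<and>
       A1 \<in> \<A>)"
proof -
  note u = assms
  obtain fD where fD: "\<And>p x y. D p x = Some y \<longleftrightarrow> eval fD [N p, N x] (N y)"
    using u unfolding universal_decompressor_def computable2_def by blast
  define dd where "dd c b = N (the (D (S c) (S b)))" for c b
  define TD where "TD c \<longleftrightarrow> (\<forall>z. D (S c) z \<noteq> None)" for c
  have orc: "eval fD [c, b] (dd c b)" if tc: "TD c" for c b
  proof -
    obtain y where y: "D (S c) (S b) = Some y" using tc unfolding TD_def by blast
    then have "eval fD [N (S c), N (S b)] (N y)" using fD by blast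
    then show ?thesis using y unfolding dd_def by simp
  qed
  interpret IA: orc fD dd TD TD id
    by unfold_locales (auto intro: orc R_cong[OF R_q])
  interpret IB: orc fD dd TD "\<lambda>q. TD (restc q)" restc
    by unfold_locales (auto intro: orc R_rest[OF R_q])
  have ra: "rep TD 1 (\<lambda>q xs. Fac dd q (dd q (xs!0)))"
  proof -
    have "rep TD 1 (\<lambda>q xs. Fac dd (id q) (dd (id q) (xs!0)))" by (intro IA.R_Fac IA.R_ddO) (intro rp; simp)
    then show ?thesis by simp
  qed
  have rb: "rep TD 1 (\<lambda>q xs. dd q (firstc (xs!0)))"
  proof -
    have "rep TD 1 (\<lambda>q xs. dd (id q) (firstc (xs!0)))" by (intro IA.R_ddO) (intro rp; simp)
    then show ?thesis by simp
  qed
  have rc: "rep TD 1 (\<lambda>q xs. Fac dd q (xs!0))"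
  proof -
    have "rep TD 1 (\<lambda>q xs. Fac dd (id q) (xs!0))" by (intro IA.R_Fac) (intro rp; simp)
    then show ?thesis by simp
  qed
  have rd: "rep (\<lambda>q. TD (restc q)) 1 (\<lambda>q xs. Fd dd (restc q) (firstc q))"
    by (intro IB.R_Fd) (intro rp)
  obtain ca where ca: "\<And>p. TD (N p) \<Longrightarrow> \<exists>q. length q \<le> length p + ca \<and> (\<forall>x. D q x = Some (S (Fac dd (N p) (dd (N p) (N x)))))"
    using UL[OF u ra] by auto
  obtain cb where cb: "\<And>p. TD (N p) \<Longrightarrow> \<exists>q. length q \<le> length p + cb \<and> (\<forall>x. D q x = Some (S (dd (N p) (firstc (N x)))))"
    using UL[OF u rb] by auto
  obtain cc where cc: "\<And>p. TD (N p) \<Longrightarrow> \<exists>q. length q \<le> length p + cc \<and> (\<forall>x. D q x = Some (S (Fac dd (N p) (N x))))"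
    using UL[OF u rc] by auto
  obtain cd where cd: "\<And>p. TD (restc (N p)) \<Longrightarrow> \<exists>q. length q \<le> length p + cd \<and> (\<forall>x. D q x = Some (S (Fd dd (restc (N p)) (firstc (N p)))))"
    using UL[OF u rd] by auto
  define c where "c = real (ca + cb + cc + cd + 5)"
  show ?thesis
  proof (rule exI[of _ c], intro allI impI)
    fix n x A \<epsilon>
    assume H: "length x = n \<and> finite A \<and> x \<in> A \<and> real (CT D (enc_set A) x) \<le> \<epsilon>"
    then have lx: "length x = n" and finA: "finite A" and xA: "x \<in> A" and ctA: "real (CT D (enc_set A) x) \<le> \<epsilon>"
      by auto
    obtain p where lp: "length p = CT D (enc_set A) x" and tot: "\<forall>z. D p z \<noteq> None" and px: "D p x = Some (enc_set A)"
      using CT_wit[OF u] by blast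
    have TDp: "TD (N p)" unfolding TD_def using tot by simp
    have ddp: "dd (N p) b = N (the (D p (S b)))" for b unfolding dd_def by simp
    define t where "t = N (enc_set A)"
    define P where "P s = Pset dd (N p) s" for s
    define A1 where "A1 = P t"
    define Fam where "Fam = (\<lambda>z. P (dd (N p) z)) ` {2 ^ n - 1 ..< 2 ^ n - 1 + 2 ^ n}"
    have dd_eq: "dd (N p) (N w) = t \<longleftrightarrow> D p w = Some (enc_set A)" for w
    proof -
      obtain y where y: "D p w = Some y" using tot by blast
      then show ?thesis unfolding ddp t_def by (auto simp: N_inj)
    qed
    have A1_eq: "A1 = {w \<in> A. D p w = Some (enc_set A)}"
    proof -
      have "A1 = S ` {e \<in> N ` A. dd (N p) e = t}"
        unfolding A1_def P_def Pset_def t_def using Elems_enc_set[OF finA] by simp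
      also have "... = {w \<in> A. dd (N p) (N w) = t}" by (rule img_NS)
      also have "... = {w \<in> A. D p w = Some (enc_set A)}"
        by (simp only: dd_eq)
      finally show ?thesis .
    qed
    have xA1: "x \<in> A1" using A1_eq xA px by simp
    have A1A: "A1 \<subseteq> A" using A1_eq by auto
    have finA1: "finite A1" using A1A finA finite_subset by blast
    have ddx: "dd (N p) (N x) = t" using dd_eq px by simp
    have Fac_t: "S (Fac dd (N p) t) = enc_set A1"
      unfolding Fac_eq A1_def P_def by simp
    define L where "L = log 2 (real n + 2)"
    have L1: "1 \<le> L"
    proof -
      have "log 2 (2::real) \<le> log 2 (real n + 2)" by (subst log_le_cancel_iff) auto
      then show ?thesis unfolding L_def by simp
    qed
    have c0: "0 \<le> c" unfolding c_def by simp
    have cL: "c \<le> c * L" using L1 c0 by (metis mult_le_cancel_left1 mult.commute mult_cancel_left2 order_refl mult_left_mono)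
    have kp: "real (length p) \<le> \<epsilon>" using lp ctA by simp
    obtain qa where qa: "length qa \<le> length p + ca" "\<forall>z. D qa z = Some (S (Fac dd (N p) (dd (N p) (N z))))"
      using ca[OF TDp] by blast
    have CTa: "CT D (enc_set A1) x \<le> length qa"
      by (rule CT_le) (use qa ddx Fac_t in auto)
    have goal_a: "real (CT D (enc_set A1) x) \<le> \<epsilon> + c * L"
    proof -
      have "real (CT D (enc_set A1) x) \<le> real (length p) + real ca" using CTa qa(1) by linarith
      moreover have "real ca \<le> c" unfolding c_def by simp
      ultimately show ?thesis using kp cL by linarith
    qed
    obtain qb where qb: "length qb \<le> length p + cb" "\<forall>z. D qb z = Some (S (dd (N p) (firstc (N z))))"
      using cb[OF TDp] by blast
    obtain w0 ws where sl: "sorted_list_of_set A1 = w0 # ws"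
      using xA1 finA1 by (cases "sorted_list_of_set A1") auto
    have w0: "w0 \<in> A1" using sl finA1 by (metis list.set_intros(1) set_sorted_list_of_set)
    have fst: "firstc (N (enc_set A1)) = N w0"
      unfolding enc_set_def sl using parse_sd(2)[of w0 "concat (map self_delim ws)"] by simp
    have "dd (N p) (N w0) = t" using w0 A1_eq dd_eq by simp
    then have Dqb: "D qb (enc_set A1) = Some (enc_set A)" using qb fst unfolding t_def by simp
    have CTb: "CT D (enc_set A) (enc_set A1) \<le> length qb"
      by (rule CT_le) (use qb Dqb in auto)
    have goal_b: "real (CT D (enc_set A) (enc_set A1)) < \<epsilon> + c * L"
    proof -
      have "real (CT D (enc_set A) (enc_set A1)) \<le> real (length p) + real cb" using CTb qb(1) by linarith
      moreover have "real cb + 1 \<le> c" unfolding c_def by simp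
      ultimately show ?thesis using kp cL by linarith
    qed
    obtain qc where qc: "length qc \<le> length p + cc" "\<forall>z. D qc z = Some (S (Fac dd (N p) (N z)))"
      using cc[OF TDp] by blast
    have CTc: "CT D (enc_set A1) (enc_set A) \<le> length qc"
      by (rule CT_le) (use qc Fac_t t_def in auto)
    have goal_c: "real (CT D (enc_set A1) (enc_set A)) < \<epsilon> + c * L"
    proof -
      have "real (CT D (enc_set A1) (enc_set A)) \<le> real (length p) + real cc" using CTc qc(1) by linarith
      moreover have "real cc + 1 \<le> c" unfolding c_def by simp
      ultimately show ?thesis using kp cL by linarith
    qed
    define q' where "q' = self_delim (S n) @ p"
    have f': "firstc (N q') = n" and r': "restc (N q') = N p"
      unfolding q'_def using parse_sd[of "S n" p] by simp_all
    obtain qd where qd: "length qd \<le> length q' + cd" "\<forall>z. D qd z = Some (S (Fd dd (N p) n))"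
      using cd[of q'] r' f' TDp by auto
    have fam: "enc_family Fam = S (Fd dd (N p) n)"
      unfolding Fd_eq Fam_def P_def enc_family_def enc_set_def by (simp add: image_image)
    have KCd: "KC D (enc_family Fam) \<le> length qd"
      by (rule KC_le) (use qd fam in auto)
    have goal_d: "real (KC D (enc_family Fam)) \<le> \<epsilon> + c * L"
    proof -
      have lq': "length q' = 2 * length (S n) + 2 + length p"
        unfolding q'_def by (simp add: length_self_delim)
      have "real (KC D (enc_family Fam)) \<le> 2 * real (length (S n)) + 2 + real (length p) + real cd"
        using KCd qd(1) lq' by linarith
      moreover have "real (length (S n)) \<le> L" unfolding L_def by (rule len_log)
      moreover have "(real cd + 4) * L \<le> c * L" using L1 unfolding c_def by (intro mult_right_mono) auto
      moreover have "real cd \<le> real cd * L" using L1 by (simp add: mult_le_cancel_left1)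
      ultimately show ?thesis using kp L1 by (simp add: algebra_simps)
    qed
    have part: "is_partition Fam"
    proof -
      have "Fam = Pset dd (N p) ` (dd (N p) ` {2 ^ n - 1 ..< 2 ^ n - 1 + 2 ^ n})"
        unfolding Fam_def P_def by (simp add: image_image)
      then show ?thesis using part_Pset by simp
    qed
    have finFam: "finite Fam" unfolding Fam_def by simp
    have finB: "\<forall>B\<in>Fam. finite B" unfolding Fam_def P_def using finite_Pset by blast
    have A1Fam: "A1 \<in> Fam"
    proof -
      have "2 ^ n \<le> N x + 1" using N_plus1_ge[of x] lx by simp
      moreover have "N x + 2 \<le> 2 ^ (n + 1)" using N_plus2_le[of x] lx by simp
      ultimately have "N x \<in> {2 ^ n - 1 ..< 2 ^ n - 1 + 2 ^ n}" by auto
      then show ?thesis unfolding Fam_def A1_def using ddx by (metis image_eqI)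
    qed
    have cardA1: "card A1 \<le> card A" using A1A finA by (rule card_mono[rotated])
    show "\<exists>A1 \<A>. finite A1 \<and> finite \<A> \<and> (\<forall>B\<in>\<A>. finite B) \<and> is_partition \<A> \<and>
       real (KC D (enc_family \<A>)) \<le> \<epsilon> + c * log 2 (real n + 2) \<and>
       x \<in> A1 \<and> real (CT D (enc_set A1) x) \<le> \<epsilon> + c * log 2 (real n + 2) \<and>
       real (CT D (enc_set A) (enc_set A1)) < \<epsilon> + c * log 2 (real n + 2) \<and>
       real (CT D (enc_set A1) (enc_set A)) < \<epsilon> + c * log 2 (real n + 2) \<and>
       card A1 \<le> card A \<and> A1 \<in> \<A>"
      using finA1 finFam finB part goal_d xA1 goal_a goal_b goal_c cardA1 A1Fam unfolding L_def by blast
  qed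
qed


end
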